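(* Let $p\in(0,1)$ and let $N_j$ be the counting processes of Simon's model with parameter $p$. For every $\gamma\in(1,1/p)$ there exist constants $c=c(\gamma,p)>0$ and $\eta=\eta(\gamma,p)\in(0,1)$ such that $$\mathbb E\big[N_j(n)^\gamma\big]\le c\,(n/j)^\eta\qquad\text{for all integers }1\le j\le n.$$
   Context: Simon's model with parameter $p$: let $\varepsilon_1=0$ and let $(\varepsilon_i)_{i\ge2}$ be i.i.d. Bernoulli($p$) variables. Define indices $\pi(i)$ recursively: $\pi(1)=1$; for $i\ge2$, $\pi(i)=i$ if $\varepsilon_i=0$, and if $\varepsilon_i=1$, $\pi(i)=\pi(U_i)$ where $U_i$ is uniform on $\{1,\dots,i-1\}$, independent of everything else. The counting processes are $N_j(k)=\#\{1\le\ell\le k:\pi(\ell)=j\}$ for integers $j,k\ge1$. *)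

theory Defs
  imports "HOL-Probability.Probability"
begin

text \<open>Law of the list [pi(1), ..., pi(k)] in Simon's model with parameter p.
  Step from i-1 = Suc k to i = Suc (Suc k): with probability p (epsilon_i = 1)
  choose U_i uniformly in {1..i-1} (list index U_i - 1 in {0..<Suc k}) and set
  pi(i) = pi(U_i); otherwise pi(i) = i.\<close>
fun simon :: "real \<Rightarrow> nat \<Rightarrow> nat list pmf" where
  "simon p 0 = return_pmf []"
| "simon p (Suc 0) = return_pmf [1]"
| "simon p (Suc (Suc k)) =
     do { xs \<leftarrow> simon p (Suc k);
          e \<leftarrow> bernoulli_pmf p;
          if e then map_pmf (\<lambda>u. xs @ [xs ! u]) (pmf_of_set {..<Suc k})
          else return_pmf (xs @ [Suc (Suc k)]) }"

definition simon_N :: "nat list \<Rightarrow> nat \<Rightarrow> nat" where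
  "simon_N xs j = count_list xs j"

end

theory Submission
  imports Defs
begin


lemma simon_support:
  "xs \<in> set_pmf (simon p n) \<Longrightarrow> length xs = n \<and> set xs \<subseteq> {1..n} \<and> count_list xs n \<le> 1"
proof (induction p n arbitrary: xs rule: simon.induct)
  case (1 p) then show ?case by simp
next
  case (2 p) then show ?case by simp
next
  case (3 p k)
  from "3.prems" obtain ys e where ys: "ys \<in> set_pmf (simon p (Suc k))"
    and xs: "xs \<in> set_pmf (if e then map_pmf (\<lambda>u. ys @ [ys ! u]) (pmf_of_set {..<Suc k})
          else return_pmf (ys @ [Suc (Suc k)]))"
    by (auto simp: set_bind_pmf)
  from "3.IH"[OF ys] have L: "length ys = Suc k" and S: "set ys \<subseteq> {1..Suc k}" by auto
  have nin: "Suc (Suc k) \<notin> set ys" using S by auto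
  show ?case
  proof (cases e)
    case True
    have so: "set_pmf (pmf_of_set {..<Suc k}) = {..<Suc k}"
      by (rule set_pmf_of_set) auto
    with xs True obtain u where u: "u < Suc k" and "xs = ys @ [ys ! u]" by auto
    moreover have m: "ys ! u \<in> {1..Suc k}" using S u L by (metis nth_mem subsetD)
    ultimately show ?thesis using L S nin by auto
  next
    case False
    with xs have "xs = ys @ [Suc (Suc k)]" by auto
    then show ?thesis using L S nin by auto
  qed
qed

lemma simon_finite: "finite (set_pmf (simon p n))"
proof (rule finite_subset)
  show "set_pmf (simon p n) \<subseteq> {xs. set xs \<subseteq> {1..n} \<and> length xs = n}"
    using simon_support by blast
  show "finite {xs. set xs \<subseteq> {1..n} \<and> length xs = n}"
    by (rule finite_lists_length_eq) simp
qed

lemma exp_bind_fin: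
  fixes h :: "'b \<Rightarrow> real"
  assumes "finite (set_pmf p)" "\<And>x. x \<in> set_pmf p \<Longrightarrow> finite (set_pmf (f x))"
  shows "measure_pmf.expectation (p \<bind> f) h =
     measure_pmf.expectation p (\<lambda>x. measure_pmf.expectation (f x) h)"
proof -
  have "measure_pmf.expectation (p \<bind> f) h =
     (\<Sum>a\<in>set_pmf p. pmf p a *\<^sub>R measure_pmf.expectation (f a) h)"
    by (rule pmf_expectation_bind) (use assms in auto)
  also have "\<dots> = measure_pmf.expectation p (\<lambda>x. measure_pmf.expectation (f x) h)"
    by (subst integral_measure_pmf_real[of "set_pmf p"]) (use assms in \<open>auto simp: mult.commute\<close>)
  finally show ?thesis .
qed



lemma diff_powr_le:
  fixes z g :: real assumes "0 < z" "1 \<le> g"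
  shows "(z+1) powr g - z powr g \<le> g * (z+1) powr (g-1)"
proof -
  have "\<exists>w. z < w \<and> w < z+1 \<and> (z+1) powr g - z powr g = (z + 1 - z) * (g * w powr (g - 1))"
    by (rule MVT2) (use assms in \<open>auto intro!: has_real_derivative_powr\<close>)
  then obtain w where w: "z < w" "w < z+1" and eq: "(z+1) powr g - z powr g = g * w powr (g - 1)"
    by auto
  have "w powr (g-1) \<le> (z+1) powr (g-1)"
    by (rule powr_mono2) (use assms w in auto)
  then show ?thesis using eq assms by (simp add: mult_left_mono)
qed

lemma key_ineq:
  fixes a g y p \<eta> :: real
  assumes "0 < a" "1 \<le> g" "0 \<le> y" "0 \<le> p" "p * g * (1 + 1/a) powr (g - 1) \<le> \<eta>"
  shows "p * y * ((y+a+1) powr g - (y+a) powr g) \<le> \<eta> * (y+a) powr g"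
proof -
  define z where "z = y + a"
  have z: "0 < z" "a \<le> z" "y \<le> z" using assms by (auto simp: z_def)
  have d: "(z+1) powr g - z powr g \<le> g * (z+1) powr (g-1)" by (rule diff_powr_le) (use z assms in auto)
  have e2: "z * (z powr (g-1) * (1 + 1/z) powr (g-1)) = z powr g * (1 + 1/z) powr (g-1)"
  proof -
    have "z * z powr (g-1) = z powr g" using z by (simp add: powr_mult_base)
    then show ?thesis by (simp add: mult.assoc[symmetric])
  qed
  have "p * y * ((z+1) powr g - z powr g) \<le> p * z * ((z+1) powr g - z powr g)"
  proof (rule mult_right_mono)
    show "p * y \<le> p * z" using z assms by (simp add: mult_left_mono)
    show "0 \<le> (z+1) powr g - z powr g" using z assms by (simp add: powr_mono2)
  qed
  also have "\<dots> \<le> p * z * (g * (z+1) powr (g-1))"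
    by (rule mult_left_mono[OF d]) (use z assms in auto)
  also have e1: "(z+1) powr (g-1) = z powr (g-1) * (1 + 1/z) powr (g-1)"
  proof -
    have "z + 1 = z * (1 + 1/z)" using z by (simp add: field_simps)
    then show ?thesis using z by (metis powr_mult less_imp_le zero_le_divide_1_iff add_nonneg_nonneg zero_le_one)
  qed
  also have "p * z * (g * (z powr (g - 1) * (1 + 1 / z) powr (g - 1))) = p * g * (1 + 1/z) powr (g-1) * (z powr g)"
    using e2
    by (metis (no_types, lifting) mult.assoc mult.commute)
  also have "\<dots> \<le> p * g * (1 + 1/a) powr (g-1) * z powr g"
  proof (rule mult_right_mono)
    have "1 + 1/z \<le> 1 + 1/a" using z assms by (simp add: frac_le)
    then have "(1 + 1/z) powr (g-1) \<le> (1 + 1/a) powr (g-1)"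
      using assms z by (intro powr_mono2) auto
    then show "p * g * (1 + 1/z) powr (g-1) \<le> p * g * (1 + 1/a) powr (g-1)"
      using assms by (simp add: mult_left_mono)
  qed simp
  also have "\<dots> \<le> \<eta> * z powr g"
    by (rule mult_right_mono) (use assms in auto)
  finally show ?thesis by (simp add: z_def add.assoc)
qed



definition FF :: "real \<Rightarrow> real \<Rightarrow> nat \<Rightarrow> nat list \<Rightarrow> real" where
  "FF a g j xs = (real (count_list xs j) + a) powr g"

lemma step_inner:
  fixes p a g \<eta> :: real
  assumes L: "length xs = Suc k" and jk: "j \<le> Suc k" and p: "0 \<le> p" "p \<le> 1"
    and a: "0 < a" and g: "1 \<le> g" and cond: "p * g * (1 + 1/a) powr (g - 1) \<le> \<eta>"
  shows "measure_pmf.expectation (bernoulli_pmf p \<bind> (\<lambda>e. if e then map_pmf (\<lambda>u. xs @ [xs ! u]) (pmf_of_set {..<Suc k})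
          else return_pmf (xs @ [Suc (Suc k)]))) (FF a g j) \<le> (1 + \<eta> / real (Suc k)) * FF a g j xs"
proof -
  define c where "c = count_list xs j"
  define f where "f = (\<lambda>x::real. (x + a) powr g)"
  have so: "set_pmf (pmf_of_set {..<Suc k}) = {..<Suc k}"
    by (rule set_pmf_of_set) auto
  let ?h = "\<lambda>e. measure_pmf.expectation (if e then map_pmf (\<lambda>u. xs @ [xs ! u]) (pmf_of_set {..<Suc k})
          else return_pmf (xs @ [Suc (Suc k)])) (FF a g j)"
  have E1: "measure_pmf.expectation (bernoulli_pmf p \<bind> (\<lambda>e. if e then map_pmf (\<lambda>u. xs @ [xs ! u]) (pmf_of_set {..<Suc k})
          else return_pmf (xs @ [Suc (Suc k)]))) (FF a g j) = measure_pmf.expectation (bernoulli_pmf p) ?h"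
    by (rule exp_bind_fin) (auto simp: so)
  also have "\<dots> = (\<Sum>e\<in>UNIV. ?h e * pmf (bernoulli_pmf p) e)"
    by (rule integral_measure_pmf_real) auto
  also have "\<dots> = ?h True * p + ?h False * (1 - p)"
    using p by (simp add: UNIV_bool)
  finally have E: "measure_pmf.expectation (bernoulli_pmf p \<bind> (\<lambda>e. if e then map_pmf (\<lambda>u. xs @ [xs ! u]) (pmf_of_set {..<Suc k})
          else return_pmf (xs @ [Suc (Suc k)]))) (FF a g j) = ?h True * p + ?h False * (1 - p)" .
  have hF: "?h False = f c"
    using jk by (simp add: FF_def f_def c_def)
  have hT: "?h True = (\<Sum>u\<in>{..<Suc k}. FF a g j (xs @ [xs ! u])) / real (Suc k)"
    by (simp add: integral_map_pmf, subst integral_pmf_of_set) auto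
  have card: "card {u \<in> {..<Suc k}. xs ! u = j} = c"
  proof -
    have "c = card {i. i < length xs \<and> j = xs ! i}"
      unfolding c_def count_list_eq_length_filter length_filter_conv_card ..
    also have "{i. i < length xs \<and> j = xs ! i} = {u \<in> {..<Suc k}. xs ! u = j}"
      using L by auto
    finally show ?thesis by simp
  qed
  have "(\<Sum>u\<in>{..<Suc k}. FF a g j (xs @ [xs ! u]))
      = (\<Sum>u\<in>{..<Suc k}. f c + (if xs ! u = j then f (c+1) - f c else 0))"
    by (rule sum.cong) (auto simp: FF_def f_def c_def add_ac)
  also have "\<dots> = real (Suc k) * f c + (\<Sum>u\<in>{..<Suc k}. (if xs ! u = j then f (c+1) - f c else 0))"
    by (simp add: sum.distrib)
  also have "(\<Sum>u\<in>{..<Suc k}. (if xs ! u = j then f (c+1) - f c else 0))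
      = (\<Sum>u\<in>{u \<in> {..<Suc k}. xs ! u = j}. f (c+1) - f c)"
    by (rule sum.inter_filter[symmetric]) simp
  also have "\<dots> = real c * (f (c+1) - f c)"
    using card by simp
  finally have S: "(\<Sum>u\<in>{..<Suc k}. FF a g j (xs @ [xs ! u])) = real (Suc k) * f c + real c * (f (c+1) - f c)" .
  have K: "p * real c * (f (c+1) - f c) \<le> \<eta> * f c"
    using key_ineq[OF a g _ p(1) cond, of "real c"] by (simp add: f_def add_ac)
  have "measure_pmf.expectation (bernoulli_pmf p \<bind> (\<lambda>e. if e then map_pmf (\<lambda>u. xs @ [xs ! u]) (pmf_of_set {..<Suc k})
          else return_pmf (xs @ [Suc (Suc k)]))) (FF a g j) = f c + p * real c * (f (c+1) - f c) / real (Suc k)"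
    unfolding E hF hT S by (simp add: field_simps)
  also have "\<dots> \<le> f c + \<eta> * f c / real (Suc k)"
    using K by (simp add: divide_right_mono)
  also have "\<dots> = (1 + \<eta> / real (Suc k)) * FF a g j xs"
    by (simp add: FF_def f_def c_def field_simps)
  finally show ?thesis .
qed



lemma growth:
  fixes \<eta> :: real and m :: nat
  assumes "1 \<le> m" "0 \<le> \<eta>"
  shows "(1 + \<eta> / real (Suc m)) * real m powr \<eta> \<le> real (Suc m) powr \<eta>"
proof -
  have m0: "0 < real m" using assms by simp
  have "ln (real m / real (Suc m)) \<le> real m / real (Suc m) - 1"
    by (rule ln_le_minus_one) (use m0 in auto)
  also have "\<dots> = - 1 / real (Suc m)" by (simp add: field_simps)
  finally have l: "1 / real (Suc m) \<le> ln (real (Suc m)) - ln (real m)"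
    using m0 by (simp add: ln_div)
  have "1 + \<eta> / real (Suc m) \<le> exp (\<eta> / real (Suc m))" by (rule exp_ge_add_one_self)
  also have "\<dots> \<le> exp (\<eta> * (ln (real (Suc m)) - ln (real m)))"
    using mult_left_mono[OF l assms(2)] by simp
  finally have A: "1 + \<eta> / real (Suc m) \<le> exp (\<eta> * (ln (real (Suc m)) - ln (real m)))" .
  have "(1 + \<eta> / real (Suc m)) * real m powr \<eta> \<le> exp (\<eta> * (ln (real (Suc m)) - ln (real m))) * real m powr \<eta>"
    by (rule mult_right_mono[OF A]) simp
  also have "\<dots> = real (Suc m) powr \<eta>"
    using m0 by (simp add: powr_def exp_add[symmetric] algebra_simps)
  finally show ?thesis .
qed

lemma expectation_mono_fin:
  fixes h1 h2 :: "'a \<Rightarrow> real"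
  assumes "finite (set_pmf M)" "\<And>x. x \<in> set_pmf M \<Longrightarrow> h1 x \<le> h2 x"
  shows "measure_pmf.expectation M h1 \<le> measure_pmf.expectation M h2"
  by (rule integral_mono_AE) (use assms in \<open>auto intro: integrable_measure_pmf_finite simp: AE_measure_pmf_iff\<close>)

lemma main_bound:
  fixes p a g \<eta> :: real
  assumes p: "0 \<le> p" "p \<le> 1" and a: "0 < a" and g: "1 \<le> g" and cond: "p * g * (1 + 1/a) powr (g - 1) \<le> \<eta>"
    and eta: "0 \<le> \<eta>" "\<eta> \<le> 1" and j: "1 \<le> j" "j \<le> n"
  shows "measure_pmf.expectation (simon p n) (FF a g j) \<le> 2 * (1 + a) powr g * (real n / real j) powr \<eta>"
proof -
  define G where "G n = measure_pmf.expectation (simon p n) (FF a g j)" for n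
  define f1 where "f1 = (1 + a) powr g"
  have f1: "0 < f1" using a by (simp add: f1_def)
  have stepG: "G (Suc n) \<le> (1 + \<eta> / real n) * G n" if "j \<le> n" for n
  proof -
    from that j obtain k where k: "n = Suc k" by (cases n) auto
    have "G (Suc n) = measure_pmf.expectation (simon p n) (\<lambda>xs. measure_pmf.expectation
        (bernoulli_pmf p \<bind> (\<lambda>e. if e then map_pmf (\<lambda>u. xs @ [xs ! u]) (pmf_of_set {..<Suc k})
          else return_pmf (xs @ [Suc (Suc k)]))) (FF a g j))"
      unfolding G_def k simon.simps
    proof (rule exp_bind_fin)
      show "finite (set_pmf (simon p (Suc k)))" by (rule simon_finite)
      have so: "set_pmf (pmf_of_set {..<Suc k}) = {..<Suc k}"
        by (rule set_pmf_of_set) auto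
      show "finite (set_pmf (bernoulli_pmf p \<bind> (\<lambda>e. if e then map_pmf (\<lambda>u. x @ [x ! u]) (pmf_of_set {..<Suc k})
          else return_pmf (x @ [Suc (Suc k)]))))" for x
        by (auto simp: so set_bind_pmf)
    qed
    also have "\<dots> \<le> measure_pmf.expectation (simon p n) (\<lambda>xs. (1 + \<eta> / real n) * FF a g j xs)"
    proof (rule expectation_mono_fin[OF simon_finite])
      fix xs assume "xs \<in> set_pmf (simon p n)"
      then have "length xs = Suc k" using simon_support k by blast
      then show "measure_pmf.expectation
        (bernoulli_pmf p \<bind> (\<lambda>e. if e then map_pmf (\<lambda>u. xs @ [xs ! u]) (pmf_of_set {..<Suc k})
          else return_pmf (xs @ [Suc (Suc k)]))) (FF a g j) \<le> (1 + \<eta> / real n) * FF a g j xs"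
        using step_inner[OF _ _ p a g cond] that k by simp
    qed
    also have "\<dots> = (1 + \<eta> / real n) * G n" by (simp add: G_def)
    finally show ?thesis .
  qed
  have G0: "0 \<le> G n" for n
    unfolding G_def FF_def by (rule integral_nonneg_AE) auto
  have baseG: "G j \<le> f1"
  proof -
    have "G j \<le> measure_pmf.expectation (simon p j) (\<lambda>_. f1)"
      unfolding G_def
    proof (rule expectation_mono_fin[OF simon_finite])
      fix xs assume "xs \<in> set_pmf (simon p j)"
      then have "count_list xs j \<le> 1" using simon_support by blast
      then show "FF a g j xs \<le> f1" unfolding FF_def f1_def using a g
        by (intro powr_mono2) auto
    qed
    then show ?thesis by simp
  qed
  define K where "K = 2 * f1 / real j powr \<eta>"
  have ind: "G (Suc m) \<le> K * real m powr \<eta>" if "j \<le> m" for m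
    using that
  proof (induction m rule: dec_induct)
    case base
    have "G (Suc j) \<le> (1 + \<eta> / real j) * G j" by (rule stepG) simp
    also have "\<dots> \<le> 2 * f1"
    proof -
      have "1 + \<eta> / real j \<le> 2" using eta j by (simp add: divide_le_eq)
      then show ?thesis using baseG G0[of j] f1
        by (intro mult_mono) auto
    qed
    also have "\<dots> = K * real j powr \<eta>" using j by (simp add: K_def)
    finally show ?case .
  next
    case (step m)
    have "G (Suc (Suc m)) \<le> (1 + \<eta> / real (Suc m)) * G (Suc m)" by (rule stepG) (use step in simp)
    also have "\<dots> \<le> (1 + \<eta> / real (Suc m)) * (K * real m powr \<eta>)"
      by (rule mult_left_mono[OF step.IH]) (use eta in simp)
    also have "\<dots> = K * ((1 + \<eta> / real (Suc m)) * real m powr \<eta>)" by simp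
    also have "\<dots> \<le> K * real (Suc m) powr \<eta>"
      by (rule mult_left_mono[OF growth]) (use step j eta f1 in \<open>auto simp: K_def\<close>)
    finally show ?case .
  qed
  show ?thesis
  proof (cases "n = j")
    case True
    have "G n \<le> 2 * f1 * (real n / real j) powr \<eta>" using baseG f1 True j by simp
    then show ?thesis by (simp add: G_def f1_def)
  next
    case False
    with j obtain m where m: "n = Suc m" "j \<le> m" by (cases n) auto
    have "G n \<le> K * real m powr \<eta>" using ind m by simp
    also have "\<dots> = 2 * f1 * (real m / real j) powr \<eta>"
      using j by (simp add: K_def powr_divide)
    also have "\<dots> \<le> 2 * f1 * (real n / real j) powr \<eta>"
      using m j f1 eta by (intro mult_left_mono powr_mono2 divide_right_mono) auto
    finally show ?thesis by (simp add: G_def f1_def)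
  qed
qed


theorem lemma5:
  fixes p \<gamma> :: real
  assumes "0 < p" "p < 1" "1 < \<gamma>" "\<gamma> < 1 / p"
  shows "\<exists>c \<eta>. c > 0 \<and> 0 < \<eta> \<and> \<eta> < 1 \<and>
    (\<forall>j n. 1 \<le> j \<and> j \<le> n \<longrightarrow>
       measure_pmf.expectation (simon p n) (\<lambda>xs. real (simon_N xs j) powr \<gamma>)
         \<le> c * (real n / real j) powr \<eta>)"
proof -
  have pg: "p * \<gamma> < 1" using assms by (simp add: field_simps)
  have pg0: "0 < p * \<gamma>" using assms by simp
  define \<eta> where "\<eta> = (p * \<gamma> + 1) / 2"
  have eta: "0 < \<eta>" "\<eta> < 1" "p * \<gamma> < \<eta>" using pg pg0 unfolding \<eta>_def by (simp_all add: field_simps)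
  define r where "r = \<eta> / (p * \<gamma>)"
  have r: "1 < r" using eta pg0 by (simp add: r_def mult.commute)
  define s where "s = r powr (1 / (\<gamma> - 1))"
  have s: "1 < s" unfolding s_def using r assms by simp
  define a where "a = 1 / (s - 1)"
  have a: "0 < a" using s by (simp add: a_def)
  have sa: "1 + 1 / a = s" using s by (simp add: a_def)
  have "s powr (\<gamma> - 1) = r" unfolding s_def using r assms by (simp add: powr_powr)
  then have cond: "p * \<gamma> * (1 + 1/a) powr (\<gamma> - 1) \<le> \<eta>"
    using sa pg0 eta by (simp add: r_def)
  show ?thesis
  proof (intro exI conjI allI impI)
    show "0 < 2 * (1 + a) powr \<gamma>" using a by simp
    show "0 < \<eta>" "\<eta> < 1" using eta by auto
    fix j n :: nat assume jn: "1 \<le> j \<and> j \<le> n"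
    have "measure_pmf.expectation (simon p n) (\<lambda>xs. real (simon_N xs j) powr \<gamma>)
        \<le> measure_pmf.expectation (simon p n) (FF a \<gamma> j)"
      by (rule expectation_mono_fin[OF simon_finite])
        (use a assms in \<open>auto simp: FF_def simon_N_def intro!: powr_mono2\<close>)
    also have "\<dots> \<le> 2 * (1 + a) powr \<gamma> * (real n / real j) powr \<eta>"
      by (rule main_bound) (use assms a cond eta jn in auto)
    finally show "measure_pmf.expectation (simon p n) (\<lambda>xs. real (simon_N xs j) powr \<gamma>)
        \<le> 2 * (1 + a) powr \<gamma> * (real n / real j) powr \<eta>" .
  qed
qed

end
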